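(* Let $\mathcal{X}=({\bm X},m^{\bm X}_\bullet,\nu^{\bm X})$, $\mathcal{Y}=({\bm Y},m^{\bm Y}_\bullet,\nu^{\bm Y})$ be Markov chains on finite sets with $n=|{\bm X}|$, $m=|{\bm Y}|$, $C\in\mathbb{R}_+^{n\times m}$ a cost matrix, $\delta\in(0,1]$ and $\epsilon\ge0$. Then the limit $d^{\delta,(\infty)}_{\mathrm{WL},\epsilon}(\mathcal{X},\mathcal{Y};C):=\lim_{k\to\infty}d^{\delta,(k)}_{\mathrm{WL},\epsilon}(\mathcal{X},\mathcal{Y};C)$ exists, equals $d^\epsilon_{\mathrm W}(\nu^{\bm X},\nu^{\bm Y};C^{\epsilon,\delta,(\infty)})$, and for every $k\in\mathbb{N}$, $$\big|d^{\delta,(k)}_{\mathrm{WL},\epsilon}(\mathcal{X},\mathcal{Y};C)-d^{\delta,(\infty)}_{\mathrm{WL},\epsilon}(\mathcal{X},\mathcal{Y};C)\big|\le\frac{(1-\delta)^k}{\delta}\big(2\|C\|_\infty+\epsilon\log(nm)\big).$$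
   Context: For $\alpha\in\mathcal{P}({\bm X}),\beta\in\mathcal{P}({\bm Y})$, cost $D$ and $\epsilon\ge0$, $d^{\epsilon}_{\mathrm W}(\alpha,\beta;D)=\min_{P\in\mathcal{C}(\alpha,\beta)}\sum_{i,j}P_{ij}D_{ij}+\epsilon\sum_{i,j}P_{ij}\log P_{ij}$, with $\mathcal{C}(\alpha,\beta)$ the set of couplings. Define $C^{\epsilon,\delta,(0)}=C$, $C^{\epsilon,\delta,(l)}_{ij}=\delta C_{ij}+(1-\delta)d^\epsilon_{\mathrm W}(m^{\bm X}_i,m^{\bm Y}_j;C^{\epsilon,\delta,(l-1)})$, and $d^{\delta,(k)}_{\mathrm{WL},\epsilon}(\mathcal{X},\mathcal{Y};C)=d^\epsilon_{\mathrm W}(\nu^{\bm X},\nu^{\bm Y};C^{\epsilon,\delta,(k)})$ for $k\in\mathbb{N}$. $C^{\epsilon,\delta,(\infty)}$ denotes the unique fixed point of $D\mapsto\big(\delta C_{ij}+(1-\delta)d^\epsilon_{\mathrm W}(m^{\bm X}_i,m^{\bm Y}_j;D)\big)_{i,j}$ (equivalently $\lim_k C^{\epsilon,\delta,(k)}$). $\|\cdot\|_\infty$ is the entrywise max norm. *)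

theory Defs
  imports "HOL-Analysis.Analysis"
begin

definition prob_vec :: "('x::finite \<Rightarrow> real) \<Rightarrow> bool" where
  "prob_vec p \<longleftrightarrow> (\<forall>i. p i \<ge> 0) \<and> (\<Sum>i\<in>UNIV. p i) = 1"

text \<open>A Markov chain (X, m_bullet, nu): transition kernel m (row i is m_i) and distribution nu.\<close>
definition markov_chain :: "('x::finite \<Rightarrow> 'x \<Rightarrow> real) \<Rightarrow> ('x \<Rightarrow> real) \<Rightarrow> bool" where
  "markov_chain m \<nu> \<longleftrightarrow> (\<forall>i. prob_vec (m i)) \<and> prob_vec \<nu>"

definition couplings :: "('x::finite \<Rightarrow> real) \<Rightarrow> ('y::finite \<Rightarrow> real) \<Rightarrow> ('x \<Rightarrow> 'y \<Rightarrow> real) set" where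
  "couplings \<alpha> \<beta> = {P. (\<forall>i j. P i j \<ge> 0) \<and> (\<forall>i. (\<Sum>j\<in>UNIV. P i j) = \<alpha> i)
                          \<and> (\<forall>j. (\<Sum>i\<in>UNIV. P i j) = \<beta> j)}"

definition xlogx :: "real \<Rightarrow> real" where
  "xlogx t = (if t = 0 then 0 else t * ln t)"

definition ot_cost :: "real \<Rightarrow> ('x::finite \<Rightarrow> 'y::finite \<Rightarrow> real) \<Rightarrow> ('x \<Rightarrow> 'y \<Rightarrow> real) \<Rightarrow> real" where
  "ot_cost \<epsilon> D P = (\<Sum>i\<in>UNIV. \<Sum>j\<in>UNIV. P i j * D i j) + \<epsilon> * (\<Sum>i\<in>UNIV. \<Sum>j\<in>UNIV. xlogx (P i j))"

text \<open>Entropic Wasserstein distance d^eps_W(alpha,beta;D) (the minimum is attained; Inf = min).\<close>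
definition dW :: "real \<Rightarrow> ('x::finite \<Rightarrow> real) \<Rightarrow> ('y::finite \<Rightarrow> real) \<Rightarrow> ('x \<Rightarrow> 'y \<Rightarrow> real) \<Rightarrow> real" where
  "dW \<epsilon> \<alpha> \<beta> D = (INF P \<in> couplings \<alpha> \<beta>. ot_cost \<epsilon> D P)"

definition WL_step :: "real \<Rightarrow> real \<Rightarrow> ('x::finite \<Rightarrow> 'x \<Rightarrow> real) \<Rightarrow> ('y::finite \<Rightarrow> 'y \<Rightarrow> real)
    \<Rightarrow> ('x \<Rightarrow> 'y \<Rightarrow> real) \<Rightarrow> ('x \<Rightarrow> 'y \<Rightarrow> real) \<Rightarrow> ('x \<Rightarrow> 'y \<Rightarrow> real)" where
  "WL_step \<epsilon> \<delta> mX mY C D = (\<lambda>i j. \<delta> * C i j + (1 - \<delta>) * dW \<epsilon> (mX i) (mY j) D)"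

primrec C_iter :: "real \<Rightarrow> real \<Rightarrow> ('x::finite \<Rightarrow> 'x \<Rightarrow> real) \<Rightarrow> ('y::finite \<Rightarrow> 'y \<Rightarrow> real)
    \<Rightarrow> ('x \<Rightarrow> 'y \<Rightarrow> real) \<Rightarrow> nat \<Rightarrow> ('x \<Rightarrow> 'y \<Rightarrow> real)" where
  "C_iter \<epsilon> \<delta> mX mY C 0 = C"
| "C_iter \<epsilon> \<delta> mX mY C (Suc l) = WL_step \<epsilon> \<delta> mX mY C (C_iter \<epsilon> \<delta> mX mY C l)"

definition C_inf :: "real \<Rightarrow> real \<Rightarrow> ('x::finite \<Rightarrow> 'x \<Rightarrow> real) \<Rightarrow> ('y::finite \<Rightarrow> 'y \<Rightarrow> real)
    \<Rightarrow> ('x \<Rightarrow> 'y \<Rightarrow> real) \<Rightarrow> ('x \<Rightarrow> 'y \<Rightarrow> real)" where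
  "C_inf \<epsilon> \<delta> mX mY C = (THE D. WL_step \<epsilon> \<delta> mX mY C D = D)"

definition dWL :: "real \<Rightarrow> real \<Rightarrow> ('x::finite \<Rightarrow> 'x \<Rightarrow> real) \<Rightarrow> ('x \<Rightarrow> real)
    \<Rightarrow> ('y::finite \<Rightarrow> 'y \<Rightarrow> real) \<Rightarrow> ('y \<Rightarrow> real) \<Rightarrow> ('x \<Rightarrow> 'y \<Rightarrow> real) \<Rightarrow> nat \<Rightarrow> real" where
  "dWL \<epsilon> \<delta> mX \<nu>X mY \<nu>Y C k = dW \<epsilon> \<nu>X \<nu>Y (C_iter \<epsilon> \<delta> mX mY C k)"

definition max_norm :: "('x::finite \<Rightarrow> 'y::finite \<Rightarrow> real) \<Rightarrow> real" where
  "max_norm C = Max {\<bar>C i j\<bar> | i j. True}"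

end

theory Submission
  imports Defs
begin

lemma max_norm_ge: "\<bar>D i j\<bar> \<le> max_norm (D::'x::finite \<Rightarrow> 'y::finite \<Rightarrow> real)"
proof -
  have eq: "{\<bar>D i j\<bar> | i j. True} = (\<lambda>(i,j). \<bar>D i j\<bar>) ` UNIV" by auto
  show ?thesis unfolding max_norm_def eq by (rule Max_ge) auto
qed

lemma max_norm_le:
  assumes "\<forall>i j. \<bar>D i j\<bar> \<le> b"
  shows "max_norm (D::'x::finite \<Rightarrow> 'y::finite \<Rightarrow> real) \<le> b"
proof -
  have eq: "{\<bar>D i j\<bar> | i j. True} = (\<lambda>(i,j). \<bar>D i j\<bar>) ` UNIV" by auto
  show ?thesis unfolding max_norm_def eq using assms by (subst Max_le_iff) auto
qed

lemma max_norm_nonneg: "0 \<le> max_norm (D::'x::finite \<Rightarrow> 'y::finite \<Rightarrow> real)"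
  using max_norm_ge[of D] abs_ge_zero order_trans by blast

lemma coupling_mass:
  assumes "P \<in> couplings \<alpha> \<beta>" "prob_vec \<alpha>"
  shows "(\<Sum>i\<in>UNIV. \<Sum>j\<in>UNIV. P i j) = 1"
  using assms unfolding couplings_def prob_vec_def by auto

lemma coupling_le1:
  assumes "P \<in> couplings \<alpha> \<beta>" "prob_vec \<alpha>"
  shows "P i j \<le> 1" "0 \<le> P i j"
proof -
  have nn: "\<forall>i j. P i j \<ge> 0" using assms unfolding couplings_def by auto
  have "P i j \<le> (\<Sum>j\<in>UNIV. P i j)" by (rule member_le_sum) (use nn in auto)
  also have "\<dots> = \<alpha> i" using assms unfolding couplings_def by auto
  also have "\<dots> \<le> (\<Sum>i\<in>UNIV. \<alpha> i)" by (rule member_le_sum) (use assms in \<open>auto simp: prob_vec_def\<close>)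
  also have "\<dots> = 1" using assms by (auto simp: prob_vec_def)
  finally show "P i j \<le> 1" .
  show "0 \<le> P i j" using nn by auto
qed

lemma xlogx_entry:
  assumes "p \<ge> 0" "(N::real) > 0"
  shows "- xlogx p - p * ln N \<le> 1 / N - p"
proof (cases "p = 0")
  case True then show ?thesis using assms by (simp add: xlogx_def)
next
  case False
  then have pp: "p > 0" using assms by auto
  have "ln (1 / (N * p)) \<le> 1 / (N * p) - 1" by (rule ln_le_minus_one) (use pp assms in simp)
  then have "p * ln (1 / (N * p)) \<le> p * (1 / (N * p) - 1)" using pp by (intro mult_left_mono) auto
  moreover have "ln (1 / (N * p)) = - ln N - ln p" using pp assms by (simp add: ln_div ln_mult)
  moreover have "p * (1 / (N * p) - 1) = 1 / N - p" using pp assms by (simp add: field_simps)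
  ultimately show ?thesis using False by (simp add: xlogx_def algebra_simps)
qed

lemma card_pos_prod: "real (CARD('x::finite) * CARD('y::finite)) > 0"
  by simp

lemma entropy_lb:
  assumes "P \<in> couplings \<alpha> (\<beta> :: 'y::finite \<Rightarrow> real)" "prob_vec (\<alpha> :: 'x::finite \<Rightarrow> real)"
  shows "(\<Sum>i\<in>UNIV. \<Sum>j\<in>UNIV. xlogx (P i j)) \<ge> - ln (real (CARD('x) * CARD('y)))"
proof -
  define N where "N = real (CARD('x) * CARD('y))"
  have Np: "N > 0" unfolding N_def by simp
  have "(\<Sum>i\<in>UNIV. \<Sum>j\<in>(UNIV::'y set). - xlogx (P i j) - P i j * ln N)
      \<le> (\<Sum>i\<in>UNIV. \<Sum>j\<in>(UNIV::'y set). 1 / N - P i j)"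
    by (intro sum_mono xlogx_entry Np coupling_le1[OF assms])
  also have "\<dots> = real (CARD('x) * CARD('y)) / N - 1"
    using coupling_mass[OF assms] by (simp add: sum_subtractf)
  also have "\<dots> = 0" using Np unfolding N_def by simp
  finally have "(\<Sum>i\<in>UNIV. \<Sum>j\<in>(UNIV::'y set). - xlogx (P i j)) - ln N * (\<Sum>i\<in>UNIV. \<Sum>j\<in>UNIV. P i j) \<le> 0"
    by (simp add: sum_subtractf sum_distrib_left mult.commute)
  then show ?thesis using coupling_mass[OF assms] unfolding N_def by (simp add: sum_negf)
qed

lemma entropy_ub:
  assumes "P \<in> couplings \<alpha> \<beta>" "prob_vec (\<alpha> :: 'x::finite \<Rightarrow> real)"
  shows "(\<Sum>i\<in>UNIV. \<Sum>j\<in>(UNIV::'y::finite set). xlogx (P i j)) \<le> 0"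
proof -
  have "xlogx (P i j) \<le> 0" for i j
  proof -
    have a: "0 \<le> P i j" "P i j \<le> 1" using coupling_le1[OF assms] by auto
    show ?thesis
    proof (cases "P i j = 0")
      case False
      then have "ln (P i j) \<le> 0" using a by simp
      then show ?thesis using a False by (simp add: xlogx_def mult_nonneg_nonpos)
    qed (simp add: xlogx_def)
  qed
  then show ?thesis by (intro sum_nonpos) auto
qed

lemma product_coupling:
  assumes "prob_vec \<alpha>" "prob_vec \<beta>"
  shows "(\<lambda>i j. \<alpha> i * \<beta> j) \<in> couplings \<alpha> \<beta>"
  using assms unfolding couplings_def prob_vec_def
  by (auto simp: sum_distrib_left[symmetric] sum_distrib_right[symmetric])

lemma cost_diff_le:
  assumes "P \<in> couplings \<alpha> \<beta>" "prob_vec \<alpha>" "\<forall>i j. \<bar>D i j\<bar> \<le> M"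
  shows "\<bar>\<Sum>i\<in>UNIV. \<Sum>j\<in>UNIV. P i j * D i j\<bar> \<le> M"
proof -
  have "\<bar>\<Sum>i\<in>UNIV. \<Sum>j\<in>UNIV. P i j * D i j\<bar> \<le> (\<Sum>i\<in>UNIV. \<bar>\<Sum>j\<in>UNIV. P i j * D i j\<bar>)"
    by (rule sum_abs)
  also have "\<dots> \<le> (\<Sum>i\<in>UNIV. \<Sum>j\<in>UNIV. \<bar>P i j * D i j\<bar>)"
    by (intro sum_mono sum_abs)
  also have "\<dots> \<le> (\<Sum>i\<in>UNIV. \<Sum>j\<in>UNIV. P i j * M)"
    using coupling_le1(2)[OF assms(1,2)] assms(3)
    by (intro sum_mono) (simp add: abs_mult mult_left_mono)
  also have "\<dots> = M" using coupling_mass[OF assms(1,2)]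
    by (simp add: sum_distrib_right[symmetric])
  finally show ?thesis .
qed

lemma ot_lb:
  assumes "P \<in> couplings \<alpha> \<beta>" "prob_vec (\<alpha> :: 'x::finite \<Rightarrow> real)" "\<epsilon> \<ge> 0"
  shows "ot_cost \<epsilon> (D :: 'x \<Rightarrow> 'y::finite \<Rightarrow> real) P \<ge> - max_norm D - \<epsilon> * ln (real (CARD('x) * CARD('y)))"
proof -
  have "\<bar>\<Sum>i\<in>UNIV. \<Sum>j\<in>UNIV. P i j * D i j\<bar> \<le> max_norm D"
    using cost_diff_le[OF assms(1,2)] max_norm_ge by blast
  moreover have "\<epsilon> * (\<Sum>i\<in>UNIV. \<Sum>j\<in>(UNIV::'y set). xlogx (P i j)) \<ge> \<epsilon> * (- ln (real (CARD('x) * CARD('y))))"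
    using entropy_lb[OF assms(1,2)] assms(3) by (intro mult_left_mono) auto
  ultimately show ?thesis unfolding ot_cost_def by linarith
qed

lemma bdd:
  assumes "prob_vec (\<alpha> :: 'x::finite \<Rightarrow> real)" "\<epsilon> \<ge> 0"
  shows "bdd_below (ot_cost \<epsilon> (D :: 'x \<Rightarrow> 'y::finite \<Rightarrow> real) ` couplings \<alpha> \<beta>)"
  using ot_lb[OF _ assms(1) assms(2)] by (intro bdd_belowI2) blast

lemma dW_lip:
  assumes "prob_vec (\<alpha> :: 'x::finite \<Rightarrow> real)" "prob_vec \<beta>" "\<epsilon> \<ge> 0"
    "\<forall>i j. \<bar>D i j - D' i j\<bar> \<le> M"
  shows "dW \<epsilon> \<alpha> \<beta> (D :: 'x \<Rightarrow> 'y::finite \<Rightarrow> real) \<le> dW \<epsilon> \<alpha> \<beta> D' + M"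
proof -
  have ne: "couplings \<alpha> \<beta> \<noteq> {}" using product_coupling[OF assms(1,2)] by auto
  have "dW \<epsilon> \<alpha> \<beta> D - M \<le> dW \<epsilon> \<alpha> \<beta> D'"
    unfolding dW_def
  proof (rule cINF_greatest[OF ne])
    fix P assume P: "P \<in> couplings \<alpha> \<beta>"
    have "(INF P \<in> couplings \<alpha> \<beta>. ot_cost \<epsilon> D P) \<le> ot_cost \<epsilon> D P"
      by (rule cINF_lower[OF bdd[OF assms(1,3)] P])
    moreover have "ot_cost \<epsilon> D P - ot_cost \<epsilon> D' P = (\<Sum>i\<in>UNIV. \<Sum>j\<in>UNIV. P i j * (D i j - D' i j))"
      unfolding ot_cost_def by (simp add: sum_subtractf algebra_simps)
    moreover have "\<bar>\<Sum>i\<in>UNIV. \<Sum>j\<in>UNIV. P i j * (D i j - D' i j)\<bar> \<le> M"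
      by (rule cost_diff_le[OF P assms(1)]) (use assms(4) in auto)
    ultimately show "(INF P \<in> couplings \<alpha> \<beta>. ot_cost \<epsilon> D P) - M \<le> ot_cost \<epsilon> D' P" by linarith
  qed
  then show ?thesis by simp
qed

lemma dW_lip_abs:
  assumes "prob_vec (\<alpha> :: 'x::finite \<Rightarrow> real)" "prob_vec \<beta>" "\<epsilon> \<ge> 0"
    "\<forall>i j. \<bar>D i j - D' i j\<bar> \<le> M"
  shows "\<bar>dW \<epsilon> \<alpha> \<beta> (D :: 'x \<Rightarrow> 'y::finite \<Rightarrow> real) - dW \<epsilon> \<alpha> \<beta> D'\<bar> \<le> M"
proof -
  have "\<forall>i j. \<bar>D' i j - D i j\<bar> \<le> M" using assms(4) by (simp add: abs_minus_commute)
  then have "dW \<epsilon> \<alpha> \<beta> D' \<le> dW \<epsilon> \<alpha> \<beta> D + M" by (rule dW_lip[OF assms(1-3)])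
  then show ?thesis using dW_lip[OF assms] by linarith
qed

lemma dW_bounds:
  assumes "prob_vec (\<alpha> :: 'x::finite \<Rightarrow> real)" "prob_vec \<beta>" "\<epsilon> \<ge> 0" "\<forall>i j. C i j \<ge> 0"
  shows "dW \<epsilon> \<alpha> \<beta> (C :: 'x \<Rightarrow> 'y::finite \<Rightarrow> real) \<le> max_norm C"
    "dW \<epsilon> \<alpha> \<beta> C \<ge> - \<epsilon> * ln (real (CARD('x) * CARD('y)))"
proof -
  have ne: "couplings \<alpha> \<beta> \<noteq> {}" using product_coupling[OF assms(1,2)] by auto
  obtain P where P: "P \<in> couplings \<alpha> \<beta>" using ne by auto
  have "dW \<epsilon> \<alpha> \<beta> C \<le> ot_cost \<epsilon> C P"
    unfolding dW_def by (rule cINF_lower[OF bdd[OF assms(1,3)] P])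
  also have "\<dots> \<le> max_norm C"
  proof -
    have "\<bar>\<Sum>i\<in>UNIV. \<Sum>j\<in>UNIV. P i j * C i j\<bar> \<le> max_norm C"
      using cost_diff_le[OF P assms(1)] max_norm_ge by blast
    moreover have "\<epsilon> * (\<Sum>i\<in>UNIV. \<Sum>j\<in>(UNIV::'y set). xlogx (P i j)) \<le> 0"
      using entropy_ub[OF P assms(1)] assms(3) by (simp add: mult_nonneg_nonpos)
    ultimately show ?thesis unfolding ot_cost_def by linarith
  qed
  finally show "dW \<epsilon> \<alpha> \<beta> C \<le> max_norm C" .
  show "dW \<epsilon> \<alpha> \<beta> C \<ge> - \<epsilon> * ln (real (CARD('x) * CARD('y)))"
    unfolding dW_def
  proof (rule cINF_greatest[OF ne])
    fix P assume P: "P \<in> couplings \<alpha> \<beta>"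
    have "(\<Sum>i\<in>UNIV. \<Sum>j\<in>UNIV. P i j * C i j) \<ge> 0"
      using coupling_le1(2)[OF P assms(1)] assms(4) by (intro sum_nonneg) auto
    moreover have "\<epsilon> * (\<Sum>i\<in>UNIV. \<Sum>j\<in>(UNIV::'y set). xlogx (P i j)) \<ge> \<epsilon> * (- ln (real (CARD('x) * CARD('y))))"
      using entropy_lb[OF P assms(1)] assms(3) by (intro mult_left_mono) auto
    ultimately show "- \<epsilon> * ln (real (CARD('x) * CARD('y))) \<le> ot_cost \<epsilon> C P"
      unfolding ot_cost_def by linarith
  qed
qed


theorem proposition38:
  fixes mX :: "'x::finite \<Rightarrow> 'x \<Rightarrow> real" and \<nu>X :: "'x \<Rightarrow> real"
    and mY :: "'y::finite \<Rightarrow> 'y \<Rightarrow> real" and \<nu>Y :: "'y \<Rightarrow> real"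
    and C :: "'x \<Rightarrow> 'y \<Rightarrow> real" and \<delta> \<epsilon> :: real
  assumes "markov_chain mX \<nu>X" and "markov_chain mY \<nu>Y"
    and "\<forall>i j. C i j \<ge> 0"
    and "0 < \<delta>" and "\<delta> \<le> 1" and "0 \<le> \<epsilon>"
  shows "(\<lambda>k. dWL \<epsilon> \<delta> mX \<nu>X mY \<nu>Y C k) \<longlonglongrightarrow> dW \<epsilon> \<nu>X \<nu>Y (C_inf \<epsilon> \<delta> mX mY C)
    \<and> (\<forall>k::nat. \<bar>dWL \<epsilon> \<delta> mX \<nu>X mY \<nu>Y C k - dW \<epsilon> \<nu>X \<nu>Y (C_inf \<epsilon> \<delta> mX mY C)\<bar>
          \<le> (1 - \<delta>) ^ k / \<delta> * (2 * max_norm C + \<epsilon> * ln (real (CARD('x) * CARD('y)))))"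
proof -
  define q where "q = 1 - \<delta>"
  define F where "F = WL_step \<epsilon> \<delta> mX mY C"
  define x where "x = C_iter \<epsilon> \<delta> mX mY C"
  define lnN where "lnN = ln (real (CARD('x) * CARD('y)))"
  define B where "B = max_norm C + \<epsilon> * lnN"
  have q0: "0 \<le> q" and q1: "q < 1" using assms(4,5) unfolding q_def by auto
  have pX: "\<And>i. prob_vec (mX i)" "prob_vec \<nu>X" using assms(1) unfolding markov_chain_def by auto
  have pY: "\<And>i. prob_vec (mY i)" "prob_vec \<nu>Y" using assms(2) unfolding markov_chain_def by auto
  have lnN0: "lnN \<ge> 0" unfolding lnN_def
  proof -
    have "1 \<le> CARD('x) * CARD('y)" by (simp add: Suc_leI)
    then have "1 \<le> real (CARD('x) * CARD('y))" by linarith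
    then show "0 \<le> ln (real (CARD('x) * CARD('y)))" by simp
  qed
  have B0: "B \<ge> 0" unfolding B_def using max_norm_nonneg[of C] lnN0 assms(6) by simp
  have xS: "x (Suc l) = F (x l)" for l unfolding x_def F_def by simp
  have x0: "x 0 = C" unfolding x_def by simp
  have contr: "\<forall>i j. \<bar>F D i j - F D' i j\<bar> \<le> q * M" if "\<forall>i j. \<bar>D i j - D' i j\<bar> \<le> M" for D D' M
  proof (intro allI)
    fix i j
    have "F D i j - F D' i j = q * (dW \<epsilon> (mX i) (mY j) D - dW \<epsilon> (mX i) (mY j) D')"
      unfolding F_def WL_step_def q_def by (simp add: algebra_simps)
    moreover have "\<bar>dW \<epsilon> (mX i) (mY j) D - dW \<epsilon> (mX i) (mY j) D'\<bar> \<le> M"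
      by (rule dW_lip_abs[OF pX(1) pY(1) assms(6) that])
    ultimately show "\<bar>F D i j - F D' i j\<bar> \<le> q * M" using q0 by (simp add: abs_mult mult_left_mono)
  qed
  have step: "\<forall>i j. \<bar>x (Suc l) i j - x l i j\<bar> \<le> B * q ^ l" for l
  proof (induction l)
    case 0
    show ?case
    proof (intro allI)
      fix i j
      have "F C i j - C i j = q * (dW \<epsilon> (mX i) (mY j) C - C i j)"
        unfolding F_def WL_step_def q_def by (simp add: algebra_simps)
      moreover have "\<bar>dW \<epsilon> (mX i) (mY j) C - C i j\<bar> \<le> B"
        using mult_nonneg_nonneg[OF assms(6) lnN0] assms(3)[rule_format, of i j] dW_bounds[OF pX(1) pY(1) assms(6) assms(3), of i j] max_norm_ge[of C i j] assms(3)
        unfolding B_def lnN_def abs_le_iff by linarith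
      ultimately have "\<bar>F C i j - C i j\<bar> \<le> q * B" using q0 by (simp add: abs_mult mult_left_mono)
      also have "\<dots> \<le> B" using q0 q1 B0 by (simp add: mult_left_le_one_le)
      finally show "\<bar>x (Suc 0) i j - x 0 i j\<bar> \<le> B * q ^ 0" using xS[of 0] x0 by simp
    qed
  next
    case (Suc l)
    have "\<forall>i j. \<bar>F (x (Suc l)) i j - F (x l) i j\<bar> \<le> q * (B * q ^ l)" by (rule contr[OF Suc])
    then show ?case unfolding xS[of "Suc l"] xS[of l] by (simp add: algebra_simps)
  qed
  have geo: "\<bar>x (k + d) i j - x k i j\<bar> \<le> B * q ^ k * (1 - q ^ d) / \<delta>" for k d i j
  proof (induction d)
    case 0 then show ?case by simp
  next
    case (Suc d)
    have "\<bar>x (k + Suc d) i j - x k i j\<bar> \<le> \<bar>x (Suc (k + d)) i j - x (k + d) i j\<bar> + \<bar>x (k + d) i j - x k i j\<bar>"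
      by simp
    also have "\<dots> \<le> B * q ^ (k + d) + B * q ^ k * (1 - q ^ d) / \<delta>"
      using step[of "k + d"] Suc by (intro add_mono) auto
    also have "\<dots> = B * q ^ k * (1 - q ^ Suc d) / \<delta>"
      using assms(4) unfolding q_def by (simp add: field_simps power_add)
    finally show ?case .
  qed
  have geo2: "\<bar>x m i j - x k i j\<bar> \<le> B * q ^ k / \<delta>" if "k \<le> m" for k m i j
  proof -
    define d where "d = m - k"
    have m: "m = k + d" using that unfolding d_def by simp
    have "B * q ^ k * (1 - q ^ d) / \<delta> \<le> B * q ^ k / \<delta>"
    proof -
      have "0 \<le> B * q ^ k" using B0 q0 by (simp add: zero_le_mult_iff)
      moreover have "0 \<le> q ^ d" using q0 by simp
      ultimately have "B * q ^ k * (1 - q ^ d) \<le> B * q ^ k * 1"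
        by (intro mult_left_mono) auto
      then show ?thesis using assms(4) by (simp add: divide_right_mono)
    qed
    then show ?thesis using geo[of k d i j] unfolding m by linarith
  qed
  have conv: "convergent (\<lambda>k. x k i j)" for i j
  proof -
    have sm: "summable (\<lambda>l. x (Suc l) i j - x l i j)"
    proof (rule summable_comparison_test)
      show "\<exists>N. \<forall>n\<ge>N. norm (x (Suc n) i j - x n i j) \<le> B * q ^ n" using step by auto
      show "summable (\<lambda>n. B * q ^ n)" using q0 q1 by (intro summable_mult summable_geometric) auto
    qed
    have "(\<lambda>n. \<Sum>l<n. x (Suc l) i j - x l i j) \<longlonglongrightarrow> suminf (\<lambda>l. x (Suc l) i j - x l i j)"
      by (rule summable_LIMSEQ[OF sm])
    then have "(\<lambda>n. x n i j - x 0 i j) \<longlonglongrightarrow> suminf (\<lambda>l. x (Suc l) i j - x l i j)"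
      by (simp add: sum_lessThan_telescope[of "\<lambda>l. x l i j"])
    then have "(\<lambda>n. x n i j - x 0 i j + x 0 i j) \<longlonglongrightarrow> suminf (\<lambda>l. x (Suc l) i j - x l i j) + x 0 i j"
      by (intro tendsto_add) auto
    then show ?thesis unfolding convergent_def by auto
  qed
  define L where "L = (\<lambda>i j. lim (\<lambda>k. x k i j))"
  have xL: "(\<lambda>k. x k i j) \<longlonglongrightarrow> L i j" for i j
    unfolding L_def using conv convergent_LIMSEQ_iff by blast
  have tail: "\<forall>i j. \<bar>x k i j - L i j\<bar> \<le> B * q ^ k / \<delta>" for k
  proof (intro allI)
    fix i j
    have "(\<lambda>m. \<bar>x m i j - x k i j\<bar>) \<longlonglongrightarrow> \<bar>L i j - x k i j\<bar>"
      by (intro tendsto_intros xL)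
    then have "\<bar>L i j - x k i j\<bar> \<le> B * q ^ k / \<delta>"
      by (rule LIMSEQ_le_const2) (use geo2 in blast)
    then show "\<bar>x k i j - L i j\<bar> \<le> B * q ^ k / \<delta>" by (simp add: abs_minus_commute)
  qed
  have qk0: "(\<lambda>k. c * q ^ k) \<longlonglongrightarrow> 0" for c
    using q0 q1 by (intro tendsto_mult_right_zero LIMSEQ_power_zero) auto
  have fixL: "F L = L"
  proof (intro ext)
    fix i j
    have "\<bar>F L i j - L i j\<bar> \<le> (2 * B / \<delta>) * q ^ k" for k
    proof -
      have "\<bar>F L i j - F (x k) i j\<bar> \<le> q * (B * q ^ k / \<delta>)"
        using contr[of L "x k" "B * q ^ k / \<delta>"] tail[of k] by (simp add: abs_minus_commute)
      moreover have "\<bar>x (Suc k) i j - L i j\<bar> \<le> B * q ^ Suc k / \<delta>" using tail by blast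
      moreover have "q * (B * q ^ k / \<delta>) \<le> B * q ^ k / \<delta>"
        using q0 q1 B0 assms(4) by (intro mult_left_le_one_le) auto
      moreover have "B * q ^ Suc k / \<delta> \<le> B * q ^ k / \<delta>"
        using q0 q1 B0 assms(4) by (intro divide_right_mono mult_left_mono) (auto simp: power_le_one mult_left_le_one_le)
      moreover have "(2 * B / \<delta>) * q ^ k = 2 * (B * q ^ k / \<delta>)" by simp
      moreover have "x (Suc k) i j = F (x k) i j" using xS by simp
      ultimately show ?thesis by linarith
    qed
    then have "\<bar>F L i j - L i j\<bar> \<le> 0"
      by (intro LIMSEQ_le_const[OF qk0[of "2 * B / \<delta>"]]) blast
    then show "F L i j = L i j" by simp
  qed
  have uniq: "D = L" if "F D = D" for D
  proof -
    define M where "M = max_norm (\<lambda>i j. D i j - L i j)"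
    have a: "\<forall>i j. \<bar>D i j - L i j\<bar> \<le> M" unfolding M_def using max_norm_ge[of "\<lambda>i j. D i j - L i j"] by simp
    have "\<forall>i j. \<bar>D i j - L i j\<bar> \<le> q * M" using contr[OF a] that fixL by simp
    then have "M \<le> q * M" unfolding M_def by (rule max_norm_le)
    then have "M \<le> 0"
    proof (cases "M > 0")
      case True
      then have "q * M < 1 * M" using q1 by (intro mult_strict_right_mono) auto
      then show ?thesis using \<open>M \<le> q * M\<close> by simp
    qed simp
    show ?thesis
    proof (intro ext)
      fix i j
      have "\<bar>D i j - L i j\<bar> \<le> M" using a by blast
      then show "D i j = L i j" using \<open>M \<le> 0\<close> by linarith
    qed
  qed
  have Cinf: "C_inf \<epsilon> \<delta> mX mY C = L"
    unfolding C_inf_def F_def[symmetric] by (rule the_equality) (rule fixL, erule uniq)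
  have bnd: "\<bar>dWL \<epsilon> \<delta> mX \<nu>X mY \<nu>Y C k - dW \<epsilon> \<nu>X \<nu>Y (C_inf \<epsilon> \<delta> mX mY C)\<bar> \<le> (B / \<delta>) * q ^ k" for k
    unfolding Cinf dWL_def x_def[symmetric] using dW_lip_abs[OF pX(2) pY(2) assms(6) tail[of k]]
    by (simp add: mult.commute)
  show ?thesis
  proof
    have "(\<lambda>k. dWL \<epsilon> \<delta> mX \<nu>X mY \<nu>Y C k - dW \<epsilon> \<nu>X \<nu>Y (C_inf \<epsilon> \<delta> mX mY C)) \<longlonglongrightarrow> 0"
      by (rule Lim_null_comparison[OF _ qk0[of "B / \<delta>"]]) (use bnd in auto)
    then show "(\<lambda>k. dWL \<epsilon> \<delta> mX \<nu>X mY \<nu>Y C k) \<longlonglongrightarrow> dW \<epsilon> \<nu>X \<nu>Y (C_inf \<epsilon> \<delta> mX mY C)"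
      by (rule LIM_zero_cancel)
    show "\<forall>k::nat. \<bar>dWL \<epsilon> \<delta> mX \<nu>X mY \<nu>Y C k - dW \<epsilon> \<nu>X \<nu>Y (C_inf \<epsilon> \<delta> mX mY C)\<bar>
          \<le> (1 - \<delta>) ^ k / \<delta> * (2 * max_norm C + \<epsilon> * ln (real (CARD('x) * CARD('y))))"
    proof
      fix k
      have "(B / \<delta>) * q ^ k \<le> q ^ k / \<delta> * (2 * max_norm C + \<epsilon> * lnN)"
      proof -
        have "B \<le> 2 * max_norm C + \<epsilon> * lnN" unfolding B_def using max_norm_nonneg[of C] by simp
        then have "q ^ k / \<delta> * B \<le> q ^ k / \<delta> * (2 * max_norm C + \<epsilon> * lnN)"
          using q0 assms(4) by (intro mult_left_mono) auto
        then show ?thesis by (simp add: field_simps)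
      qed
      then show "\<bar>dWL \<epsilon> \<delta> mX \<nu>X mY \<nu>Y C k - dW \<epsilon> \<nu>X \<nu>Y (C_inf \<epsilon> \<delta> mX mY C)\<bar>
          \<le> (1 - \<delta>) ^ k / \<delta> * (2 * max_norm C + \<epsilon> * ln (real (CARD('x) * CARD('y))))"
        using bnd[of k] unfolding q_def lnN_def by linarith
    qed
  qed
qed

end
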